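(* Let $T$ be a triangulation of an unpunctured bordered surface $(S,M)$. There are vertices $i,k$ of $Q_{\overline T}$ with a path $k\to i\to\tilde k$ if and only if $T$ contains (a triangulated) Möbius strip $M_2$ with two marked points, with $i$ being the non-t-mutable arc of this $M_2$ (the arc of $T$ inside $M_2$ whose flip is a one-sided closed curve).
   Context: Bordered surface: compact surface $S$ (possibly non-orientable) with nonempty boundary and a finite set $M$ of marked points on $\partial S$, at least one per boundary component; unpunctured: no interior marked points; monogon, digon, triangle excluded. Quasi-arcs: arcs (up to isotopy) not bounding a Möbius strip with one marked point, and one-sided simple closed curves; compatible = non-intersecting, or the unique arc and the unique one-sided curve inside some Möbius strip with one marked point. A quasi-triangulation is a maximal compatible set; a triangulation is one with no one-sided closed curve; an arc is t-mutable if its flip is again an arc. Orientable double cover $\overline{(S,M)}$: replace each cross-cap by a cylinder to get $\tilde S$, take two copies and glue corresponding new cylinder boundaries by the antipodal map (two oppositely oriented copies if $S$ is orientable). $T$ lifts to a triangulation $\overline T$; each arc/boundary segment $i$ has lifts $i,\tilde i$ ($\tilde{\tilde i}=i$). Adjacency quiver $Q_{\overline T}$: vertices are the arcs of $\overline T$ (and boundary segments receiving variables); for every triangle and sides $i,j$ with $j$ following $i$ in the orientation an arrow $i\to j$; 2-cycles cancelled. *)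

theory Defs
  imports Main
begin

text \<open>Combinatorial model of a triangulation T of an unpunctured bordered surface (S,M).
  Triangles are elements of a finite set Tr; every triangle d carries a local orientation,
  its sides are (d,0),(d,1),(d,2) in this cyclic order, side (d,n) running from corner n to
  corner n+1 (mod 3).  The involution g glues sides: an arc of T is an orbit {s, g s} with
  g s ~= s, a boundary segment is a fixed point of g.  tw s says whether the gluing along
  the arc of s reverses the local orientations (twisted gluing), i.e. whether the two
  oriented triangles do NOT induce opposite orientations on the common edge.\<close>

definition sides :: "'t set \<Rightarrow> ('t \<times> nat) set" where
  "sides Tr = {(d, n). d \<in> Tr \<and> n < 3}"

text \<open>Identification of corners (corner (d,c) = start point of side (d,c)) induced by gluing.\<close>
definition corner_rel ::
  "'t set \<Rightarrow> ('t \<times> nat \<Rightarrow> 't \<times> nat) \<Rightarrow> ('t \<times> nat \<Rightarrow> bool) \<Rightarrow> 't \<times> nat \<Rightarrow> 't \<times> nat \<Rightarrow> bool" where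
  "corner_rel Tr g tw c c' \<longleftrightarrow>
     (\<exists>d n d' n'. (d, n) \<in> sides Tr \<and> g (d, n) = (d', n') \<and> (d', n') \<noteq> (d, n) \<and>
        (if tw (d, n)
         then (c = (d, n) \<and> c' = (d', n')) \<or> (c = (d, Suc n mod 3) \<and> c' = (d', Suc n' mod 3))
         else (c = (d, n) \<and> c' = (d', Suc n' mod 3)) \<or> (c = (d, Suc n mod 3) \<and> c' = (d', n'))))"

definition same_vertex ::
  "'t set \<Rightarrow> ('t \<times> nat \<Rightarrow> 't \<times> nat) \<Rightarrow> ('t \<times> nat \<Rightarrow> bool) \<Rightarrow> 't \<times> nat \<Rightarrow> 't \<times> nat \<Rightarrow> bool" where
  "same_vertex Tr g tw = (\<lambda>x y. corner_rel Tr g tw x y \<or> corner_rel Tr g tw y x)\<^sup>*\<^sup>*"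

definition boundary_corner :: "('t \<times> nat \<Rightarrow> 't \<times> nat) \<Rightarrow> 't \<times> nat \<Rightarrow> bool" where
  "boundary_corner g c \<longleftrightarrow>
     (g c = c \<or> g (fst c, (snd c + 2) mod 3) = (fst c, (snd c + 2) mod 3))"

definition tri_adj :: "('t \<times> nat \<Rightarrow> 't \<times> nat) \<Rightarrow> 't \<Rightarrow> 't \<Rightarrow> bool" where
  "tri_adj g d d' \<longleftrightarrow> (\<exists>n n'. n < 3 \<and> g (d, n) = (d', n'))"

text \<open>(Tr,g,tw) is a triangulation of an unpunctured bordered surface (connected, every
  marked point on the boundary, no arc bounding a Moebius strip with one marked point --
  combinatorially: no triangle has two of its sides glued by a twist -- and (S,M) not the
  triangle, i.e. at least one arc).\<close>
definition unpunctured_triangulation ::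
  "'t set \<Rightarrow> ('t \<times> nat \<Rightarrow> 't \<times> nat) \<Rightarrow> ('t \<times> nat \<Rightarrow> bool) \<Rightarrow> bool" where
  "unpunctured_triangulation Tr g tw \<longleftrightarrow>
     finite Tr \<and> Tr \<noteq> {} \<and>
     (\<forall>s \<in> sides Tr. g s \<in> sides Tr \<and> g (g s) = s \<and> tw (g s) = tw s) \<and>
     (\<forall>d n m. (d, n) \<in> sides Tr \<and> g (d, n) = (d, m) \<and> m \<noteq> n \<longrightarrow> \<not> tw (d, n)) \<and>
     (\<forall>d \<in> Tr. \<forall>d' \<in> Tr. (tri_adj g)\<^sup>*\<^sup>* d d') \<and>
     (\<forall>c \<in> sides Tr. \<exists>c' \<in> sides Tr. boundary_corner g c' \<and> same_vertex Tr g tw c c') \<and>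
     (\<exists>s \<in> sides Tr. g s \<noteq> s)"

text \<open>Lifted sides ((d,n),b): copy b of triangle d; copy True carries the reversed
  orientation.  The lift of the edge through side s in copy b.\<close>
definition ledge ::
  "('t \<times> nat \<Rightarrow> 't \<times> nat) \<Rightarrow> ('t \<times> nat \<Rightarrow> bool) \<Rightarrow> ('t \<times> nat) \<times> bool \<Rightarrow> (('t \<times> nat) \<times> bool) set" where
  "ledge g tw x = (if g (fst x) = fst x then {x}
                   else {x, (g (fst x), snd x \<noteq> tw (fst x))})"

text \<open>Vertices of the quiver: all arcs and boundary segments of the lifted triangulation.\<close>
definition qvertices ::
  "'t set \<Rightarrow> ('t \<times> nat \<Rightarrow> 't \<times> nat) \<Rightarrow> ('t \<times> nat \<Rightarrow> bool) \<Rightarrow> (('t \<times> nat) \<times> bool) set set" where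
  "qvertices Tr g tw = {ledge g tw (s, b) | s b. s \<in> sides Tr}"

definition tilde :: "(('t \<times> nat) \<times> bool) set \<Rightarrow> (('t \<times> nat) \<times> bool) set" where
  "tilde E = (\<lambda>(s, b). (s, \<not> b)) ` E"

definition lnext :: "('t \<times> nat) \<times> bool \<Rightarrow> ('t \<times> nat) \<times> bool" where
  "lnext x = ((fst (fst x), if snd x then (snd (fst x) + 2) mod 3 else (snd (fst x) + 1) mod 3), snd x)"

definition raw_arrows ::
  "'t set \<Rightarrow> ('t \<times> nat \<Rightarrow> 't \<times> nat) \<Rightarrow> ('t \<times> nat \<Rightarrow> bool) \<Rightarrow>
   (('t \<times> nat) \<times> bool) set \<Rightarrow> (('t \<times> nat) \<times> bool) set \<Rightarrow> nat" where
  "raw_arrows Tr g tw X Y =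
     card {x. fst x \<in> sides Tr \<and> ledge g tw x = X \<and> ledge g tw (lnext x) = Y}"

text \<open>Number of arrows X \<rightarrow> Y in Q_{T bar}, after cancelling 2-cycles.\<close>
definition qarrows ::
  "'t set \<Rightarrow> ('t \<times> nat \<Rightarrow> 't \<times> nat) \<Rightarrow> ('t \<times> nat \<Rightarrow> bool) \<Rightarrow>
   (('t \<times> nat) \<times> bool) set \<Rightarrow> (('t \<times> nat) \<times> bool) set \<Rightarrow> nat" where
  "qarrows Tr g tw X Y = raw_arrows Tr g tw X Y - raw_arrows Tr g tw Y X"

text \<open>The side s = (d1,n) lies on the non-t-mutable arc of a triangulated Moebius strip M_2
  contained in T: two distinct triangles d1, d2 glued along two pairs of sides, exactly one
  of the two gluings twisted (so the union is a Moebius strip with two marked points); the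
  non-t-mutable arc is the twisted one if the two shared arcs occur in the same cyclic order
  in both triangles, and the untwisted one otherwise (equivalently: the arc of the M_2
  joining its two distinct marked points).\<close>
definition M2_nonmutable_side ::
  "'t set \<Rightarrow> ('t \<times> nat \<Rightarrow> 't \<times> nat) \<Rightarrow> ('t \<times> nat \<Rightarrow> bool) \<Rightarrow> 't \<times> nat \<Rightarrow> bool" where
  "M2_nonmutable_side Tr g tw s \<longleftrightarrow>
     (\<exists>d1 d2 n m p q. s = (d1, n) \<and> d1 \<in> Tr \<and> d2 \<in> Tr \<and> d1 \<noteq> d2 \<and>
        n < 3 \<and> m < 3 \<and> n \<noteq> m \<and>
        g (d1, n) = (d2, p) \<and> g (d1, m) = (d2, q) \<and>
        tw (d1, n) \<noteq> tw (d1, m) \<and>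
        tw (d1, n) = ((m = Suc n mod 3) = (q = Suc p mod 3)))"

end

theory Submission
  imports Defs
begin

definition nx :: "nat \<Rightarrow> bool \<Rightarrow> nat" where
  "nx a b = (if b then (a + 2) mod 3 else (a + 1) mod 3)"

lemma lnext_simp: "lnext ((d, a), b) = ((d, nx a b), b)"
  by (simp add: lnext_def nx_def)

lemma nx_tab: "nx 0 True = 2" "nx 1 True = 0" "nx 2 True = 1" "nx 0 False = 1" "nx 1 False = 2" "nx 2 False = 0"
  by (simp_all add: nx_def)

lemma suc_tab: "Suc 0 mod 3 = 1" "Suc 1 mod 3 = 2" "Suc 2 mod 3 = 0" by simp_all

lemma nx_lt: "nx a b < 3" by (simp add: nx_def)

lemma three_cases: "(a::nat) < 3 \<Longrightarrow> a = 0 \<or> a = 1 \<or> a = 2" by auto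

lemma nx_ne: "a < 3 \<Longrightarrow> nx a b \<noteq> a"
  apply (drule three_cases) apply (cases b) apply (elim disjE; simp only: nx_tab suc_tab; simp)+ done

lemma nx_nx_ne: "a < 3 \<Longrightarrow> nx (nx a b) b \<noteq> a"
  apply (drule three_cases) apply (cases b) apply (elim disjE; simp only: nx_tab suc_tab; simp)+ done

lemma nx_suc: "a < 3 \<Longrightarrow> (a = Suc (nx a b) mod 3) = b"
  apply (drule three_cases) apply (cases b) apply (elim disjE; simp only: nx_tab suc_tab; simp)+ done

lemma nx_suc2: "a < 3 \<Longrightarrow> (nx a c = Suc a mod 3) = (\<not> c)"
  apply (drule three_cases) apply (cases c) apply (elim disjE; simp only: nx_tab suc_tab; simp)+ done

lemma nx_eq: "a < 3 \<Longrightarrow> n < 3 \<Longrightarrow> a \<noteq> n \<Longrightarrow> (nx a b = n) = (b = (a = Suc n mod 3))"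
  apply (drule three_cases)+ apply (cases b) apply (elim disjE; simp only: nx_tab suc_tab; simp)+ done

lemma nx_eq2: "p < 3 \<Longrightarrow> q < 3 \<Longrightarrow> p \<noteq> q \<Longrightarrow> (nx p c = q) = (c = (q \<noteq> Suc p mod 3))"
  apply (drule three_cases)+ apply (cases c) apply (elim disjE; simp only: nx_tab suc_tab; simp)+ done

lemma in_ledge: "x \<in> ledge g tw x" by (simp add: ledge_def)

lemma finite_ledge: "finite (ledge g tw x)" by (simp add: ledge_def)

lemma mem_ledge: "z \<in> ledge g tw (s, b) \<longleftrightarrow> z = (s, b) \<or> (g s \<noteq> s \<and> z = (g s, b \<noteq> tw s))"
  by (auto simp: ledge_def)

lemma tilde_ledge: "tilde (ledge g tw (s, b)) = ledge g tw (s, \<not> b)"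
  by (auto simp: tilde_def ledge_def)

lemma ledge_pair:
  assumes "g s = s'" "s' \<noteq> s" "g s' = s" "tw s' = tw s"
  shows "ledge g tw (s', b \<noteq> tw s) = ledge g tw (s, b)"
  using assms by (auto simp: ledge_def)

lemma raw_pos:
  assumes "fst x \<in> sides Tr" "ledge g tw x = X" "ledge g tw (lnext x) = Y"
  shows "raw_arrows Tr g tw X Y > 0"
proof -
  have sub: "{x. fst x \<in> sides Tr \<and> ledge g tw x = X \<and> ledge g tw (lnext x) = Y} \<subseteq> X"
    using in_ledge by blast
  have "finite X" using assms(2) finite_ledge by blast
  then have "finite {x. fst x \<in> sides Tr \<and> ledge g tw x = X \<and> ledge g tw (lnext x) = Y}"
    using sub finite_subset by blast
  moreover have "x \<in> {x. fst x \<in> sides Tr \<and> ledge g tw x = X \<and> ledge g tw (lnext x) = Y}"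
    using assms by blast
  ultimately show ?thesis unfolding raw_arrows_def using card_gt_0_iff by blast
qed

lemma raw_zero:
  assumes "\<And>x. x \<in> X \<Longrightarrow> lnext x \<in> Y \<Longrightarrow> False"
  shows "raw_arrows Tr g tw X Y = 0"
proof -
  have "{x. fst x \<in> sides Tr \<and> ledge g tw x = X \<and> ledge g tw (lnext x) = Y} = {}"
    using assms in_ledge by blast
  then show ?thesis unfolding raw_arrows_def by (metis card.empty)
qed

lemma raw_ex:
  assumes "raw_arrows Tr g tw X Y > 0"
  shows "\<exists>x. fst x \<in> sides Tr \<and> ledge g tw x = X \<and> ledge g tw (lnext x) = Y"
proof -
  have "{x. fst x \<in> sides Tr \<and> ledge g tw x = X \<and> ledge g tw (lnext x) = Y} \<noteq> {}"
    using assms unfolding raw_arrows_def by (metis card.empty less_irrefl)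
  then show ?thesis by blast
qed

lemma core:
  assumes H1: "\<forall>s \<in> sides Tr. g s \<in> sides Tr \<and> g (g s) = s \<and> tw (g s) = tw s"
    and d: "d1 \<in> Tr" "d2 \<in> Tr" "d1 \<noteq> d2" "n < 3" "m < 3" "n \<noteq> m"
    and gn: "g (d1, n) = (d2, p)" and gm: "g (d1, m) = (d2, q)"
    and tnm: "tw (d1, n) \<noteq> tw (d1, m)"
    and cyc: "tw (d1, n) = ((m = Suc n mod 3) = (q = Suc p mod 3))"
    and bdef: "b = (m = Suc n mod 3)"
  shows "\<exists>k \<in> qvertices Tr g tw.
            qarrows Tr g tw k (ledge g tw ((d1, n), b)) > 0 \<and>
            qarrows Tr g tw (ledge g tw ((d1, n), b)) (tilde k) > 0"
proof -
  have sn: "(d1, n) \<in> sides Tr" and sm: "(d1, m) \<in> sides Tr" using d by (auto simp: sides_def)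
  have gpn: "g (d2, p) = (d1, n)" and twp: "tw (d2, p) = tw (d1, n)" and sp: "(d2, p) \<in> sides Tr"
    using H1 sn gn by metis+
  have gqm: "g (d2, q) = (d1, m)" and twq: "tw (d2, q) = tw (d1, m)" and sq: "(d2, q) \<in> sides Tr"
    using H1 sm gm by metis+
  have p3: "p < 3" and q3: "q < 3" using sp sq by (auto simp: sides_def)
  have pq: "p \<noteq> q" using gpn gqm d by auto
  define c where "c = (b \<noteq> tw (d1, n))"
  have nxm: "nx m b = n" using nx_eq[of m n b] d bdef by auto
  have nxp: "nx p c = q" using nx_eq2[of p q c] p3 q3 pq cyc bdef c_def by auto
  define i where "i = ledge g tw ((d1, n), b)"
  define k where "k = ledge g tw ((d1, m), b)"
  have i_eq: "i = {((d1, n), b), ((d2, p), c)}"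
    using gn d c_def unfolding i_def by (auto simp: ledge_def)
  have k_eq: "k = {((d1, m), b), ((d2, q), \<not> c)}"
    using gm d c_def tnm unfolding k_def by (auto simp: ledge_def)
  have tk: "tilde k = ledge g tw ((d1, m), \<not> b)" unfolding k_def by (rule tilde_ledge)
  have tk_eq: "tilde k = {((d1, m), \<not> b), ((d2, q), c)}"
    using gm d c_def tnm unfolding tk by (auto simp: ledge_def)
  have kq: "k \<in> qvertices Tr g tw" unfolding k_def qvertices_def using sm by blast
  have r1: "raw_arrows Tr g tw k i > 0"
    by (rule raw_pos[of "((d1, m), b)"]) (use sm nxm in \<open>auto simp: k_def i_def lnext_simp\<close>)
  have r2: "raw_arrows Tr g tw i k = 0"
  proof (rule raw_zero)
    fix x assume "x \<in> i" "lnext x \<in> k"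
    then show False using d nx_nx_ne[of m b] nxm
      unfolding i_eq k_eq by (auto simp: lnext_simp)
  qed
  have li: "ledge g tw ((d2, p), c) = i"
    unfolding i_def c_def by (rule ledge_pair) (use gn gpn twp d in auto)
  have lt0: "ledge g tw ((d2, q), (\<not> b) \<noteq> tw (d1, m)) = ledge g tw ((d1, m), \<not> b)"
    by (rule ledge_pair) (use gm gqm twq d in auto)
  have ceq: "c = ((\<not> b) \<noteq> tw (d1, m))" using c_def tnm by auto
  have lt: "ledge g tw ((d2, q), c) = tilde k" unfolding tk ceq by (rule lt0)
  have r3: "raw_arrows Tr g tw i (tilde k) > 0"
    by (rule raw_pos[of "((d2, p), c)"]) (use sp li lt nxp in \<open>auto simp: lnext_simp\<close>)
  have r4: "raw_arrows Tr g tw (tilde k) i = 0"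
  proof (rule raw_zero)
    fix x assume "x \<in> tilde k" "lnext x \<in> i"
    then show False using d nx_nx_ne[of p c] nxp p3
      unfolding i_eq tk_eq by (auto simp: lnext_simp)
  qed
  show ?thesis
    unfolding i_def[symmetric] qarrows_def using kq r1 r2 r3 r4 by (intro bexI[of _ k]) auto
qed


theorem lemma4p9:
  fixes Tr :: "'t set" and g :: "'t \<times> nat \<Rightarrow> 't \<times> nat" and tw :: "'t \<times> nat \<Rightarrow> bool"
  assumes "unpunctured_triangulation Tr g tw"
    and "i \<in> qvertices Tr g tw"
  shows "(\<exists>k \<in> qvertices Tr g tw.
            qarrows Tr g tw k i > 0 \<and> qarrows Tr g tw i (tilde k) > 0)
         \<longleftrightarrow> (\<exists>s b. M2_nonmutable_side Tr g tw s \<and> i = ledge g tw (s, b))"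
proof -
  have H1: "\<forall>s \<in> sides Tr. g s \<in> sides Tr \<and> g (g s) = s \<and> tw (g s) = tw s"
    and H2: "\<forall>d n m. (d, n) \<in> sides Tr \<and> g (d, n) = (d, m) \<and> m \<noteq> n \<longrightarrow> \<not> tw (d, n)"
    using assms(1) unfolding unpunctured_triangulation_def by blast+
  show ?thesis
  proof
    assume "\<exists>k \<in> qvertices Tr g tw. qarrows Tr g tw k i > 0 \<and> qarrows Tr g tw i (tilde k) > 0"
    then obtain k where "qarrows Tr g tw k i > 0" "qarrows Tr g tw i (tilde k) > 0" by blast
    then have "raw_arrows Tr g tw k i > 0" "raw_arrows Tr g tw i (tilde k) > 0"
      unfolding qarrows_def by auto
    then obtain y z where y: "fst y \<in> sides Tr" "ledge g tw y = k" "ledge g tw (lnext y) = i"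
      and z: "fst z \<in> sides Tr" "ledge g tw z = i" "ledge g tw (lnext z) = tilde k"
      using raw_ex by metis
    obtain d a b where yd: "y = ((d, a), b)" by (metis prod.collapse)
    have da: "(d, a) \<in> sides Tr" "d \<in> Tr" "a < 3" using y(1) yd by (auto simp: sides_def)
    define c where "c = nx a b"
    have c3: "c < 3" "c \<noteq> a" using nx_lt nx_ne da(3) c_def by auto
    have dc: "(d, c) \<in> sides Tr" using da c3 by (auto simp: sides_def)
    have zin: "z \<in> ledge g tw ((d, c), b)"
      using in_ledge[of z g tw] z(2) y(3) yd c_def by (simp add: lnext_simp)
    have lzin: "lnext z \<in> ledge g tw ((d, a), \<not> b)"
      using in_ledge[of "lnext z" g tw] z(3) y(2) yd tilde_ledge by metis
    have case1: False if zz: "z = ((d, c), b)"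
    proof -
      have "lnext z = ((d, nx c b), b)" using zz lnext_simp by simp
      then have "g (d, a) \<noteq> (d, a)" "g (d, a) = (d, nx c b)" "b = ((\<not> b) \<noteq> tw (d, a))"
        using lzin mem_ledge[of "lnext z" g tw "(d, a)" "\<not> b"] by auto
      then show False using H2 da(1) by (metis prod.inject)
    qed
    then have zz: "g (d, c) \<noteq> (d, c)" "z = (g (d, c), b \<noteq> tw (d, c))"
      using zin mem_ledge[of z g tw "(d, c)" b] by auto
    obtain d2 p where gc: "g (d, c) = (d2, p)" by (metis prod.collapse)
    have sp: "(d2, p) \<in> sides Tr" using H1 dc gc by metis
    have p3: "d2 \<in> Tr" "p < 3" using sp by (auto simp: sides_def)
    define e where "e = (b \<noteq> tw (d, c))"
    have lz: "lnext z = ((d2, nx p e), e)" using zz gc e_def lnext_simp by simp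
    have case2: False if "lnext z = ((d, a), \<not> b)"
    proof -
      have "d2 = d" "e = (\<not> b)" using that lz by auto
      then have "tw (d, c)" "g (d, c) = (d, p)" "p \<noteq> c" using e_def gc zz by auto
      then show False using H2 dc by blast
    qed
    then have ga: "g (d, a) \<noteq> (d, a)" "g (d, a) = (d2, nx p e)" "e = ((\<not> b) \<noteq> tw (d, a))"
      using lzin lz mem_ledge[of "lnext z" g tw "(d, a)" "\<not> b"] by auto
    have dd: "d \<noteq> d2"
    proof
      assume "d = d2"
      then have g1: "g (d, c) = (d, p)" "g (d, a) = (d, nx p e)" using gc ga by auto
      have "p \<noteq> c" using g1(1) zz(1) by auto
      then have t1: "\<not> tw (d, c)" using H2 dc g1(1) by blast
      have "nx p e \<noteq> a" using g1(2) ga(1) by auto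
      then have t2: "\<not> tw (d, a)" using H2 da(1) g1(2) by blast
      from t1 t2 show False using ga(3) e_def by auto
    qed
    have twne: "tw (d, c) \<noteq> tw (d, a)" using ga(3) e_def by auto
    have cyc: "tw (d, c) = ((a = Suc c mod 3) = (nx p e = Suc p mod 3))"
      using nx_suc[of a b] nx_suc2[of p e] da(3) p3(2) c_def e_def by auto
    have "M2_nonmutable_side Tr g tw (d, c)"
      unfolding M2_nonmutable_side_def
      using da(2) p3(1) dd c3 da(3) gc ga(2) twne cyc by blast
    moreover have "i = ledge g tw ((d, c), b)" using y(3) yd c_def by (simp add: lnext_simp)
    ultimately show "\<exists>s b. M2_nonmutable_side Tr g tw s \<and> i = ledge g tw (s, b)" by blast
  next
    assume "\<exists>s b. M2_nonmutable_side Tr g tw s \<and> i = ledge g tw (s, b)"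
    then obtain d1 d2 n m p q b0 where
      i: "i = ledge g tw ((d1, n), b0)" and
      d: "d1 \<in> Tr" "d2 \<in> Tr" "d1 \<noteq> d2" "n < 3" "m < 3" "n \<noteq> m"
      and gn: "g (d1, n) = (d2, p)" and gm: "g (d1, m) = (d2, q)"
      and tnm: "tw (d1, n) \<noteq> tw (d1, m)"
      and cyc: "tw (d1, n) = ((m = Suc n mod 3) = (q = Suc p mod 3))"
      unfolding M2_nonmutable_side_def by blast
    show "\<exists>k \<in> qvertices Tr g tw. qarrows Tr g tw k i > 0 \<and> qarrows Tr g tw i (tilde k) > 0"
    proof (cases "b0 = (m = Suc n mod 3)")
      case True
      then show ?thesis using core[OF H1 d gn gm tnm cyc True] i by simp
    next
      case False
      have sn: "(d1, n) \<in> sides Tr" and sm: "(d1, m) \<in> sides Tr" using d by (auto simp: sides_def)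
      have gpn: "g (d2, p) = (d1, n)" and twp: "tw (d2, p) = tw (d1, n)" and sp: "(d2, p) \<in> sides Tr"
        using H1 sn gn by metis+
      have gqm: "g (d2, q) = (d1, m)" and twq: "tw (d2, q) = tw (d1, m)" and sq: "(d2, q) \<in> sides Tr"
        using H1 sm gm by metis+
      have p3: "p < 3" and q3: "q < 3" using sp sq by (auto simp: sides_def)
      have pq: "p \<noteq> q" using gpn gqm d by auto
      have d': "d2 \<in> Tr" "d1 \<in> Tr" "d2 \<noteq> d1" "p < 3" "q < 3" "p \<noteq> q"
        using d p3 q3 pq by auto
      have tnm': "tw (d2, p) \<noteq> tw (d2, q)" using twp twq tnm by simp
      have cyc': "tw (d2, p) = ((q = Suc p mod 3) = (m = Suc n mod 3))" using twp cyc by auto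
      have b': "(b0 \<noteq> tw (d1, n)) = (q = Suc p mod 3)" using False cyc by auto
      have ieq: "i = ledge g tw ((d2, p), b0 \<noteq> tw (d1, n))"
        unfolding i by (rule ledge_pair[symmetric]) (use gn gpn twp d in auto)
      show ?thesis using core[OF H1 d' gpn gqm tnm' cyc' b'] ieq by simp
    qed
  qed
qed

end
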